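(* Let $S$ be a finite set and let $\Pi(S)$ be the lattice of partitions of $S$ ordered by refinement. For indeterminates $q_1,q_2$ define the matrix $\mu_{q_1,q_2}$ on $\Pi(S)\times\Pi(S)$ by \[ \mu_{q_1,q_2}(\sigma,\pi)=\begin{cases}\prod_{i=1}^k\prod_{j=1}^{\lambda_i-1}(q_2-jq_1) & \text{if }\sigma\le\pi=\{B_1,\dots,B_k\}\text{ and }B_i\text{ is partitioned into }\lambda_i\text{ blocks in }\sigma,\\ 0&\text{if }\sigma\not\le\pi.\end{cases} \] Then, as an identity of matrices with entries in $\mathbb{Z}[q_1,q_2,q_3]$, \[ \mu_{q_1,q_2}\,\mu_{q_2,q_3}=\mu_{q_1,q_3} \] (matrix multiplication).
   Context: $\sigma\le\pi$ means that $\sigma$ refines $\pi$ (every block of $\sigma$ is contained in a block of $\pi$). Matrix multiplication is $(M N)(\sigma,\pi)=\sum_{\tau\in\Pi(S)}M(\sigma,\tau)N(\tau,\pi)$. *)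

theory Defs
  imports Main "HOL-Library.Disjoint_Sets"
begin

definition partitions :: "'b set \<Rightarrow> 'b set set set" where
  "partitions S = {P. partition_on S P}"

definition refines :: "'b set set \<Rightarrow> 'b set set \<Rightarrow> bool" where
  "refines \<sigma> \<pi> \<longleftrightarrow> (\<forall>C\<in>\<sigma>. \<exists>B\<in>\<pi>. C \<subseteq> B)"

definition nblocks :: "'b set set \<Rightarrow> 'b set \<Rightarrow> nat" where
  "nblocks \<sigma> B = card {C\<in>\<sigma>. C \<subseteq> B}"

definition mu :: "'a::comm_ring_1 \<Rightarrow> 'a \<Rightarrow> 'b set set \<Rightarrow> 'b set set \<Rightarrow> 'a" where
  "mu q1 q2 \<sigma> \<pi> =
     (if refines \<sigma> \<pi>
      then (\<Prod>B\<in>\<pi>. \<Prod>j\<in>{1..<nblocks \<sigma> B}. (q2 - of_nat j * q1))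
      else 0)"

end

theory Submission
  imports Defs
begin


definition ff :: "'a::comm_ring_1 \<Rightarrow> 'a \<Rightarrow> nat \<Rightarrow> 'a" where
  "ff a b m = (\<Prod>j\<in>{1..<m}. (b - of_nat j * a))"

definition rf :: "'b set set \<Rightarrow> 'b set set \<Rightarrow> bool" where
  "rf \<sigma> \<pi> \<longleftrightarrow> (\<forall>C\<in>\<sigma>. \<exists>B\<in>\<pi>. C \<subseteq> B)"

lemma mu_eq: "mu a b \<sigma> \<pi> = (if rf \<sigma> \<pi> then \<Prod>B\<in>\<pi>. ff a b (nblocks \<sigma> B) else 0)"
  by (simp only: mu_def Defs.refines_def rf_def ff_def)

lemma ff_0[simp]: "ff a b 0 = 1" and ff_1[simp]: "ff a b (Suc 0) = 1"
  by (simp_all add: ff_def)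

lemma ff_Suc: "m \<ge> 1 \<Longrightarrow> ff a b (Suc m) = ff a b m * (b - of_nat m * a)"
  by (simp add: ff_def prod.atLeastLessThan_Suc)

lemma part_remove: "partition_on S \<tau> \<Longrightarrow> C \<in> \<tau> \<Longrightarrow> partition_on (S - C) (\<tau> - {C})"
proof -
  assume a: "partition_on S \<tau>" "C \<in> \<tau>"
  have "disjnt C (\<Union>(\<tau> - {C}))" using a by (auto simp: partition_on_def disjoint_def disjnt_def)
  moreover have "insert C (\<tau> - {C}) = \<tau>" using a by auto
  ultimately show ?thesis using a partition_on_insert[of C "\<tau> - {C}" S] by auto
qed

lemma part_insert: "partition_on A P \<Longrightarrow> disjnt p A \<Longrightarrow> p \<noteq> {} \<Longrightarrow> partition_on (p \<union> A) (insert p P)"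
proof -
  assume a: "partition_on A P" "disjnt p A" "p \<noteq> {}"
  have "\<Union>P = A" using a by (simp add: partition_on_def)
  then have "disjnt p (\<Union>P)" using a by simp
  moreover have "p \<union> A - p = A" using a by (auto simp: disjnt_def)
  ultimately show ?thesis using a partition_on_insert[of p P "p \<union> A"] by auto
qed

lemma part_disj: "partition_on S \<tau> \<Longrightarrow> C \<in> \<tau> \<Longrightarrow> E \<in> \<tau> \<Longrightarrow> C \<noteq> E \<Longrightarrow> C \<inter> E = {}"
  by (auto simp: partition_on_def disjoint_def)

lemma part_ne: "partition_on S \<tau> \<Longrightarrow> C \<in> \<tau> \<Longrightarrow> C \<noteq> {}"
  by (auto simp: partition_on_def)

lemma part_sub: "partition_on S \<tau> \<Longrightarrow> C \<in> \<tau> \<Longrightarrow> C \<subseteq> S"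
  by (auto simp: partition_on_def)

lemma part_cover: "partition_on S \<tau> \<Longrightarrow> x \<in> S \<Longrightarrow> \<exists>C\<in>\<tau>. x \<in> C"
  by (auto simp: partition_on_def)

lemma part_fin: "finite S \<Longrightarrow> partition_on S \<tau> \<Longrightarrow> finite \<tau>"
  by (rule finite_elements)



lemma decomp:
  fixes F :: "'b set set \<Rightarrow> 'a::comm_monoid_add"
  assumes P: "partition_on S' (insert D \<sigma>)" and nD: "D \<notin> \<sigma>" and fS: "finite S'"
  shows "sum F {\<tau>'. partition_on S' \<tau>' \<and> rf (insert D \<sigma>) \<tau>'} =
    (\<Sum>\<tau>\<in>{\<tau>. partition_on (S' - D) \<tau> \<and> rf \<sigma> \<tau>}. F (insert D \<tau>) + (\<Sum>C\<in>\<tau>. F (insert (C \<union> D) (\<tau> - {C}))))"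
proof -
  define S where "S = S' - D"
  define R where "R = {\<tau>. partition_on S \<tau> \<and> rf \<sigma> \<tau>}"
  define R' where "R' = {\<tau>'. partition_on S' \<tau>' \<and> rf (insert D \<sigma>) \<tau>'}"
  define g where "g = (\<lambda>(\<tau>::'b set set, C). insert (C \<union> D) (\<tau> - {C}))"
  have Dne: "D \<noteq> {}" and DS': "D \<subseteq> S'" using P by (auto simp: partition_on_def)
  have SS: "S' = D \<union> S" using DS' by (auto simp: S_def)
  have DSd: "D \<inter> S = {}" by (auto simp: S_def)
  have fS2: "finite S" using fS by (simp add: S_def)
  have finR: "finite R" unfolding R_def
    by (rule finite_subset[OF _ finitely_many_partition_on[OF fS2]]) auto
  have finR': "finite R'" unfolding R'_def
    by (rule finite_subset[OF _ finitely_many_partition_on[OF fS]]) auto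
  have Rp: "partition_on S \<tau>" "rf \<sigma> \<tau>" if "\<tau> \<in> R" for \<tau> using that by (auto simp: R_def)
  have Rfin: "finite \<tau>" if "\<tau> \<in> R" for \<tau> using Rp[OF that] fS2 part_fin by blast
  have RD: "C \<inter> D = {}" "C \<noteq> {}" "C \<subseteq> S" if "\<tau> \<in> R" "C \<in> \<tau>" for \<tau> C
    using part_sub[OF Rp(1)[OF that(1)] that(2)] part_ne[OF Rp(1)[OF that(1)] that(2)] DSd by auto
  have Dnot: "D \<notin> \<tau>" if "\<tau> \<in> R" for \<tau> using RD[OF that] Dne by blast
  have sig: "partition_on S \<sigma>" using part_remove[OF P, of D] nD by (simp add: S_def)
  have sigD: "E \<inter> D = {}" "E \<noteq> {}" if "E \<in> \<sigma>" for E
    using part_disj[OF P, of E D] part_ne[OF P, of E] that nD by auto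
  have sub1: "R' \<subseteq> insert D ` R \<union> g ` Sigma R (\<lambda>\<tau>. \<tau>)"
  proof
    fix \<tau>' assume t: "\<tau>' \<in> R'"
    then have pt: "partition_on S' \<tau>'" and rt: "rf (insert D \<sigma>) \<tau>'" by (auto simp: R'_def)
    obtain E where E: "E \<in> \<tau>'" "D \<subseteq> E" using rt by (auto simp: rf_def)
    show "\<tau>' \<in> insert D ` R \<union> g ` Sigma R (\<lambda>\<tau>. \<tau>)"
    proof (cases "E = D")
      case True
      have "partition_on S (\<tau>' - {D})" using part_remove[OF pt, of D] E True by (simp add: S_def)
      moreover have "rf \<sigma> (\<tau>' - {D})"
      proof (unfold rf_def, intro ballI)
        fix F assume F: "F \<in> \<sigma>"
        then obtain B where B: "B \<in> \<tau>'" "F \<subseteq> B" using rt by (auto simp: rf_def)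
        have "B \<noteq> D" using B sigD[OF F] by blast
        then show "\<exists>B\<in>\<tau>' - {D}. F \<subseteq> B" using B by blast
      qed
      ultimately have "\<tau>' - {D} \<in> R" by (simp add: R_def)
      moreover have "\<tau>' = insert D (\<tau>' - {D})" using E True by auto
      ultimately show ?thesis by blast
    next
      case False
      define C where "C = E - D"
      have Cne: "C \<noteq> {}" using False E by (auto simp: C_def)
      have pr: "partition_on (S' - E) (\<tau>' - {E})" using part_remove[OF pt E(1)] .
      have "disjnt C (S' - E)" by (auto simp: C_def disjnt_def)
      from part_insert[OF pr this Cne]
      have "partition_on (C \<union> (S' - E)) (insert C (\<tau>' - {E}))" .
      moreover have "C \<union> (S' - E) = S" using E part_sub[OF pt E(1)] by (auto simp: C_def S_def)
      ultimately have p1: "partition_on S (insert C (\<tau>' - {E}))" by simp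
      have "rf \<sigma> (insert C (\<tau>' - {E}))"
      proof (unfold rf_def, intro ballI)
        fix F assume F: "F \<in> \<sigma>"
        then obtain B where B: "B \<in> \<tau>'" "F \<subseteq> B" using rt by (auto simp: rf_def)
        show "\<exists>B\<in>insert C (\<tau>' - {E}). F \<subseteq> B"
        proof (cases "B = E")
          case True then show ?thesis using B sigD[OF F] by (auto simp: C_def)
        next
          case False then show ?thesis using B by blast
        qed
      qed
      with p1 have inR: "insert C (\<tau>' - {E}) \<in> R" by (simp add: R_def)
      have Cnot: "C \<notin> \<tau>' - {E}"
      proof
        assume "C \<in> \<tau>' - {E}"
        then have "C \<inter> E = {}" using part_disj[OF pt, of C E] E by auto
        then show False using Cne by (auto simp: C_def)
      qed
      have "g (insert C (\<tau>' - {E}), C) = insert (C \<union> D) (insert C (\<tau>' - {E}) - {C})"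
        by (simp add: g_def)
      also have "insert C (\<tau>' - {E}) - {C} = \<tau>' - {E}" using Cnot by auto
      also have "C \<union> D = E" using E by (auto simp: C_def)
      also have "insert E (\<tau>' - {E}) = \<tau>'" using E by auto
      finally have "\<tau>' = g (insert C (\<tau>' - {E}), C)" by simp
      moreover have "(insert C (\<tau>' - {E}), C) \<in> Sigma R (\<lambda>\<tau>. \<tau>)" using inR by auto
      ultimately show ?thesis by blast
    qed
  qed
  have sub2: "insert D ` R \<subseteq> R'"
  proof
    fix x assume "x \<in> insert D ` R"
    then obtain \<tau> where t: "\<tau> \<in> R" and x: "x = insert D \<tau>" by auto
    have "disjnt D S" using DSd by (simp add: disjnt_def)
    from part_insert[OF Rp(1)[OF t] this Dne] have "partition_on S' (insert D \<tau>)" using SS by simp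
    moreover have "rf (insert D \<sigma>) (insert D \<tau>)" using Rp(2)[OF t] by (auto simp: rf_def)
    ultimately show "x \<in> R'" using x by (simp add: R'_def)
  qed
  have sub3: "g ` Sigma R (\<lambda>\<tau>. \<tau>) \<subseteq> R'"
  proof
    fix x assume "x \<in> g ` Sigma R (\<lambda>\<tau>. \<tau>)"
    then obtain \<tau> C where t: "\<tau> \<in> R" "C \<in> \<tau>" and x: "x = insert (C \<union> D) (\<tau> - {C})"
      by (auto simp: g_def)
    have pr: "partition_on (S - C) (\<tau> - {C})" using part_remove[OF Rp(1)[OF t(1)] t(2)] .
    have "disjnt (C \<union> D) (S - C)" using DSd by (auto simp: disjnt_def)
    from part_insert[OF pr this] have "partition_on (C \<union> D \<union> (S - C)) (insert (C \<union> D) (\<tau> - {C}))"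
      using Dne by auto
    moreover have "C \<union> D \<union> (S - C) = S'" using SS RD[OF t] by auto
    ultimately have "partition_on S' x" using x by simp
    moreover have "rf (insert D \<sigma>) x"
    proof (unfold rf_def x, intro ballI)
      fix F assume F: "F \<in> insert D \<sigma>"
      show "\<exists>B\<in>insert (C \<union> D) (\<tau> - {C}). F \<subseteq> B"
      proof (cases "F = D")
        case True then show ?thesis by auto
      next
        case False
        then have "F \<in> \<sigma>" using F by auto
        then obtain B where B: "B \<in> \<tau>" "F \<subseteq> B" using Rp(2)[OF t(1)] by (auto simp: rf_def)
        then show ?thesis by (cases "B = C") auto
      qed
    qed
    ultimately show "x \<in> R'" by (simp add: R'_def)
  qed
  have Req: "R' = insert D ` R \<union> g ` Sigma R (\<lambda>\<tau>. \<tau>)" using sub1 sub2 sub3 by blast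
  have disj: "insert D ` R \<inter> g ` Sigma R (\<lambda>\<tau>. \<tau>) = {}"
  proof (rule ccontr)
    assume "insert D ` R \<inter> g ` Sigma R (\<lambda>\<tau>. \<tau>) \<noteq> {}"
    then obtain \<tau>1 \<tau> C where t: "\<tau>1 \<in> R" "\<tau> \<in> R" "C \<in> \<tau>" and eq: "insert D \<tau>1 = insert (C \<union> D) (\<tau> - {C})"
      by (auto simp: g_def)
    have "D \<in> insert (C \<union> D) (\<tau> - {C})" using eq by blast
    then show False using RD[OF t(2,3)] Dnot[OF t(2)] by auto
  qed
  have inj1: "inj_on (insert D) R"
  proof (rule inj_onI)
    fix a b assume "a \<in> R" "b \<in> R" "insert D a = insert D b"
    then show "a = b" using Dnot by (metis insert_ident)
  qed
  have inj2: "inj_on g (Sigma R (\<lambda>\<tau>. \<tau>))"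
  proof (rule inj_onI)
    fix x y assume x: "x \<in> Sigma R (\<lambda>\<tau>. \<tau>)" and y: "y \<in> Sigma R (\<lambda>\<tau>. \<tau>)" and e: "g x = g y"
    obtain \<tau>1 C1 where x1: "x = (\<tau>1, C1)" "\<tau>1 \<in> R" "C1 \<in> \<tau>1" using x by auto
    obtain \<tau>2 C2 where y1: "y = (\<tau>2, C2)" "\<tau>2 \<in> R" "C2 \<in> \<tau>2" using y by auto
    have e2: "insert (C1 \<union> D) (\<tau>1 - {C1}) = insert (C2 \<union> D) (\<tau>2 - {C2})"
      using e x1 y1 by (simp add: g_def)
    have n1: "C1 \<union> D \<notin> \<tau>2" using RD[OF y1(2)] Dne by blast
    have "C1 \<union> D \<in> insert (C2 \<union> D) (\<tau>2 - {C2})" using e2 by blast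
    then have "C1 \<union> D = C2 \<union> D" using n1 by blast
    then have C: "C1 = C2" using RD[OF x1(2,3)] RD[OF y1(2,3)] by blast
    have n2: "C1 \<union> D \<notin> \<tau>1" using RD[OF x1(2)] Dne by blast
    have "\<tau>1 - {C1} = \<tau>2 - {C1}"
    proof -
      have "\<tau>1 - {C1} = insert (C1 \<union> D) (\<tau>1 - {C1}) - {C1 \<union> D}" using n2 by auto
      also have "\<dots> = insert (C1 \<union> D) (\<tau>2 - {C1}) - {C1 \<union> D}" using e2 C by simp
      also have "\<dots> = \<tau>2 - {C1}" using n1 by auto
      finally show ?thesis .
    qed
    then have "\<tau>1 = \<tau>2" using x1(3) y1(3) C by (metis insert_Diff)
    then show "x = y" using x1 y1 C by simp
  qed
  have fin1: "finite (insert D ` R)" using finR by simp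
  have fin2: "finite (g ` Sigma R (\<lambda>\<tau>. \<tau>))" using finR Rfin by auto
  have "sum F R' = sum F (insert D ` R) + sum F (g ` Sigma R (\<lambda>\<tau>. \<tau>))"
    unfolding Req by (rule sum.union_disjoint[OF fin1 fin2 disj])
  also have "sum F (insert D ` R) = (\<Sum>\<tau>\<in>R. F (insert D \<tau>))"
    by (simp add: sum.reindex[OF inj1])
  also have "sum F (g ` Sigma R (\<lambda>\<tau>. \<tau>)) = (\<Sum>x\<in>Sigma R (\<lambda>\<tau>. \<tau>). F (g x))"
    by (simp add: sum.reindex[OF inj2])
  also have "\<dots> = (\<Sum>\<tau>\<in>R. \<Sum>C\<in>\<tau>. F (insert (C \<union> D) (\<tau> - {C})))"
    using sum.Sigma[of R "\<lambda>\<tau>. \<tau>" "\<lambda>\<tau> C. F (g (\<tau>, C))"] finR Rfin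
    by (simp add: g_def split_def)
  finally show ?thesis by (simp add: R'_def R_def S_def sum.distrib)
qed



lemma nb_ins_sub: "finite X \<Longrightarrow> D \<notin> X \<Longrightarrow> D \<subseteq> B \<Longrightarrow> nblocks (insert D X) B = Suc (nblocks X B)"
proof -
  assume a: "finite X" "D \<notin> X" "D \<subseteq> B"
  have "{C\<in>insert D X. C \<subseteq> B} = insert D {C\<in>X. C \<subseteq> B}" using a by auto
  then show ?thesis using a by (simp add: nblocks_def)
qed

lemma nb_ins_nsub: "\<not> D \<subseteq> B \<Longrightarrow> nblocks (insert D X) B = nblocks X B"
proof -
  assume a: "\<not> D \<subseteq> B"
  have "{C\<in>insert D X. C \<subseteq> B} = {C\<in>X. C \<subseteq> B}" using a by auto
  then show ?thesis by (simp add: nblocks_def)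
qed

lemma nb_eq: "{C\<in>X. C \<subseteq> B} = {C\<in>Y. C \<subseteq> B'} \<Longrightarrow> nblocks X B = nblocks Y B'"
  by (simp add: nblocks_def)

lemma cover_in:
  assumes "partition_on S \<pi>" "A \<in> \<pi>" "partition_on S X" "rf X \<pi>" "x \<in> A"
  shows "\<exists>E\<in>X. x \<in> E \<and> E \<subseteq> A"
proof -
  have "x \<in> S" using assms part_sub by blast
  then obtain E where E: "E \<in> X" "x \<in> E" using part_cover[OF assms(3)] by blast
  then obtain B where B: "B \<in> \<pi>" "E \<subseteq> B" using assms(4) by (auto simp: rf_def)
  have "B = A" using part_disj[OF assms(1) B(1) assms(2)] B E assms(5) by blast
  then show ?thesis using E B by blast
qed

lemma nb_pos:
  assumes "finite X" "partition_on S \<pi>" "A \<in> \<pi>" "partition_on S X" "rf X \<pi>"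
  shows "nblocks X A \<ge> 1"
proof -
  obtain x where "x \<in> A" using part_ne[OF assms(2,3)] by blast
  then obtain E where "E \<in> X" "E \<subseteq> A" using cover_in[OF assms(2-5)] by blast
  then have "{C\<in>X. C \<subseteq> A} \<noteq> {}" by blast
  moreover have "finite {C\<in>X. C \<subseteq> A}" using assms(1) by simp
  ultimately show ?thesis by (simp add: nblocks_def Suc_le_eq card_gt_0_iff)
qed

lemma rf_trans: "rf a b \<Longrightarrow> rf b c \<Longrightarrow> rf a c"
  unfolding rf_def by (meson order_trans)

lemma count_sum:
  assumes "finite \<sigma>" "finite \<tau>" "partition_on S \<tau>" "partition_on S \<pi>" "A \<in> \<pi>"
    "partition_on S \<sigma>" "rf \<sigma> \<tau>" "rf \<tau> \<pi>"
  shows "(\<Sum>C\<in>{C\<in>\<tau>. C \<subseteq> A}. nblocks \<sigma> C) = nblocks \<sigma> A"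
proof -
  let ?T = "{C\<in>\<tau>. C \<subseteq> A}"
  have eq: "{E\<in>\<sigma>. E \<subseteq> A} = (\<Union>C\<in>?T. {E\<in>\<sigma>. E \<subseteq> C})"
  proof (intro equalityI subsetI)
    fix E assume E: "E \<in> {E\<in>\<sigma>. E \<subseteq> A}"
    then obtain C where C: "C \<in> \<tau>" "E \<subseteq> C" using assms(7) by (auto simp: rf_def)
    have "E \<noteq> {}" using part_ne[OF assms(6)] E by simp
    then obtain x where x: "x \<in> E" by blast
    obtain B where B: "B \<in> \<pi>" "C \<subseteq> B" using assms(8) C by (auto simp: rf_def)
    have "x \<in> B" "x \<in> A" using x C B E by auto
    then have "B = A" using part_disj[OF assms(4) B(1) assms(5)] by auto
    then have "C \<in> ?T" using C B by auto
    then show "E \<in> (\<Union>C\<in>?T. {E\<in>\<sigma>. E \<subseteq> C})" using C E by blast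
  next
    fix E assume "E \<in> (\<Union>C\<in>?T. {E\<in>\<sigma>. E \<subseteq> C})"
    then show "E \<in> {E\<in>\<sigma>. E \<subseteq> A}" by blast
  qed
  have "card (\<Union>C\<in>?T. {E\<in>\<sigma>. E \<subseteq> C}) = (\<Sum>C\<in>?T. card {E\<in>\<sigma>. E \<subseteq> C})"
  proof (rule card_UN_disjoint)
    show "finite ?T" using assms(2) by simp
    show "\<forall>C\<in>?T. finite {E\<in>\<sigma>. E \<subseteq> C}" using assms(1) by simp
    show "\<forall>i\<in>?T. \<forall>j\<in>?T. i \<noteq> j \<longrightarrow> {E\<in>\<sigma>. E \<subseteq> i} \<inter> {E\<in>\<sigma>. E \<subseteq> j} = {}"
    proof (intro ballI impI)
      fix i j assume ij: "i \<in> ?T" "j \<in> ?T" "i \<noteq> j"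
      have "i \<in> \<tau>" "j \<in> \<tau>" using ij by auto
      then have "i \<inter> j = {}" using part_disj[OF assms(3), of i j] ij(3) by simp
      show "{E\<in>\<sigma>. E \<subseteq> i} \<inter> {E\<in>\<sigma>. E \<subseteq> j} = {}"
      proof (rule ccontr)
        assume "{E\<in>\<sigma>. E \<subseteq> i} \<inter> {E\<in>\<sigma>. E \<subseteq> j} \<noteq> {}"
        then obtain E where "E \<in> \<sigma>" "E \<subseteq> i" "E \<subseteq> j" by blast
        moreover have "E \<noteq> {}" using part_ne[OF assms(6) \<open>E \<in> \<sigma>\<close>] .
        ultimately show False using \<open>i \<inter> j = {}\<close> by blast
      qed
    qed
  qed
  then show ?thesis using eq by (simp add: nblocks_def)
qed



lemma main:
  fixes q1 q2 q3 :: "'a::comm_ring_1" and \<sigma> :: "'b set set"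
  assumes "finite \<sigma>"
  shows "\<forall>S \<pi>. finite S \<longrightarrow> partition_on S \<sigma> \<longrightarrow> partition_on S \<pi> \<longrightarrow>
     (\<Sum>\<tau>\<in>{\<tau>. partition_on S \<tau>}. mu q1 q2 \<sigma> \<tau> * mu q2 q3 \<tau> \<pi>) = mu q1 q3 \<sigma> \<pi>"
  using assms
proof (induction \<sigma> rule: finite_induct)
  case empty
  show ?case
  proof (intro allI impI)
    fix S :: "'b set" and \<pi> :: "'b set set"
    assume "finite S" "partition_on S {}" "partition_on S \<pi>"
    then have "S = {}" "\<pi> = {}" by (auto simp: partition_on_def)
    then show "(\<Sum>\<tau>\<in>{\<tau>. partition_on S \<tau>}. mu q1 q2 {} \<tau> * mu q2 q3 \<tau> \<pi>) = mu q1 q3 {} \<pi>"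
      by (simp add: partition_on_empty mu_eq rf_def)
  qed
next
  case (insert D \<sigma>)
  note finsig = insert.hyps(1) and nD = insert.hyps(2) and IH = insert.IH
  show ?case
  proof (intro allI impI)
    fix S' :: "'b set" and \<pi>' :: "'b set set"
    assume fS: "finite S'" and P: "partition_on S' (insert D \<sigma>)" and Pp: "partition_on S' \<pi>'"
    define S where "S = S' - D"
    define R where "R = {\<tau>. partition_on S \<tau> \<and> rf \<sigma> \<tau>}"
    define R' where "R' = {\<tau>'. partition_on S' \<tau>' \<and> rf (insert D \<sigma>) \<tau>'}"
    define F where "F = (\<lambda>\<tau>'. mu q1 q2 (insert D \<sigma>) \<tau>' * mu q2 q3 \<tau>' \<pi>')"
    have Dne: "D \<noteq> {}" and DS': "D \<subseteq> S'" using P by (auto simp: partition_on_def)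
    have DSd: "D \<inter> S = {}" by (auto simp: S_def)
    have fS2: "finite S" using fS by (simp add: S_def)
    have sig: "partition_on S \<sigma>" using part_remove[OF P, of D] nD by (simp add: S_def)
    have sigD: "E \<inter> D = {}" "E \<noteq> {}" if "E \<in> \<sigma>" for E
      using part_disj[OF P, of E D] part_ne[OF P, of E] that nD by auto
    have fpp: "finite \<pi>'" using part_fin[OF fS Pp] .
    have Rp: "partition_on S \<tau>" "rf \<sigma> \<tau>" if "\<tau> \<in> R" for \<tau> using that by (auto simp: R_def)
    have Rfin: "finite \<tau>" if "\<tau> \<in> R" for \<tau> using Rp[OF that] fS2 part_fin by blast
    have RD: "C \<inter> D = {}" "C \<noteq> {}" "C \<subseteq> S" if "\<tau> \<in> R" "C \<in> \<tau>" for \<tau> C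
      using part_sub[OF Rp(1)[OF that(1)] that(2)] part_ne[OF Rp(1)[OF that(1)] that(2)] DSd by auto
    have Dnot: "D \<notin> \<tau>" if "\<tau> \<in> R" for \<tau> using RD[OF that] Dne by blast
    have nsubD: "\<not> D \<subseteq> B" if "B \<inter> D = {}" for B using that Dne by blast
    have finR: "finite R" unfolding R_def
      by (rule finite_subset[OF _ finitely_many_partition_on[OF fS2]]) auto
    have IHS: "(\<Sum>\<tau>\<in>R. mu q1 q2 \<sigma> \<tau> * mu q2 q3 \<tau> \<pi>) = mu q1 q3 \<sigma> \<pi>" if "partition_on S \<pi>" for \<pi>
    proof -
      have "(\<Sum>\<tau>\<in>{\<tau>. partition_on S \<tau>}. mu q1 q2 \<sigma> \<tau> * mu q2 q3 \<tau> \<pi>) = (\<Sum>\<tau>\<in>R. mu q1 q2 \<sigma> \<tau> * mu q2 q3 \<tau> \<pi>)"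
        by (rule sum.mono_neutral_right[OF finitely_many_partition_on[OF fS2]])
           (auto simp: R_def mu_eq)
      then show ?thesis using IH fS2 sig that by simp
    qed
    have LHS: "(\<Sum>\<tau>\<in>{\<tau>. partition_on S' \<tau>}. F \<tau>) = sum F R'"
      by (rule sum.mono_neutral_right[OF finitely_many_partition_on[OF fS]])
         (auto simp: R'_def F_def mu_eq)
    have dec: "sum F R' = (\<Sum>\<tau>\<in>R. F (insert D \<tau>) + (\<Sum>C\<in>\<tau>. F (insert (C \<union> D) (\<tau> - {C}))))"
      unfolding R'_def R_def S_def by (rule decomp[OF P nD fS])
    have n0: "nblocks \<sigma> D = 0"
    proof -
      have e0: "{E\<in>\<sigma>. E \<subseteq> D} = {}" using sigD by blast
      show ?thesis unfolding nblocks_def e0 by simp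
    qed
    have n0t: "nblocks \<tau> D = 0" if t: "\<tau> \<in> R" for \<tau>
    proof -
      have e0: "{E\<in>\<tau>. E \<subseteq> D} = {}"
      proof (rule ccontr)
        assume "{E\<in>\<tau>. E \<subseteq> D} \<noteq> {}"
        then obtain E where E: "E \<in> \<tau>" "E \<subseteq> D" by blast
        then have "E \<inter> D = {}" "E \<noteq> {}" using RD[OF t E(1)] by auto
        then show False using E(2) by blast
      qed
      show ?thesis unfolding nblocks_def e0 by simp
    qed
    have M1: "mu q1 q2 (insert D \<sigma>) (insert D \<tau>) = mu q1 q2 \<sigma> \<tau>" if t: "\<tau> \<in> R" for \<tau>
    proof -
      have r: "rf (insert D \<sigma>) (insert D \<tau>)" using Rp(2)[OF t] by (auto simp: rf_def)
      have "(\<Prod>B\<in>insert D \<tau>. ff q1 q2 (nblocks (insert D \<sigma>) B))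
          = ff q1 q2 (nblocks (insert D \<sigma>) D) * (\<Prod>B\<in>\<tau>. ff q1 q2 (nblocks (insert D \<sigma>) B))"
        by (rule prod.insert[OF Rfin[OF t] Dnot[OF t]])
      also have "ff q1 q2 (nblocks (insert D \<sigma>) D) = 1"
        using nb_ins_sub[OF finsig nD, of D] n0 by simp
      also have "(\<Prod>B\<in>\<tau>. ff q1 q2 (nblocks (insert D \<sigma>) B)) = (\<Prod>B\<in>\<tau>. ff q1 q2 (nblocks \<sigma> B))"
        by (rule prod.cong[OF refl]) (simp add: nb_ins_nsub nsubD RD[OF t])
      finally show ?thesis using r Rp(2)[OF t] by (simp add: mu_eq)
    qed
    have M2: "mu q1 q2 (insert D \<sigma>) (insert (C \<union> D) (\<tau> - {C})) = mu q1 q2 \<sigma> \<tau> * (q2 - of_nat (nblocks \<sigma> C) * q1)"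
      if t: "\<tau> \<in> R" and C: "C \<in> \<tau>" for \<tau> C
    proof -
      have r: "rf (insert D \<sigma>) (insert (C \<union> D) (\<tau> - {C}))"
      proof (unfold rf_def, intro ballI)
        fix E assume E: "E \<in> insert D \<sigma>"
        show "\<exists>B\<in>insert (C \<union> D) (\<tau> - {C}). E \<subseteq> B"
        proof (cases "E = D")
          case True then show ?thesis by auto
        next
          case False
          then have "E \<in> \<sigma>" using E by auto
          then obtain B where B: "B \<in> \<tau>" "E \<subseteq> B" using Rp(2)[OF t] by (auto simp: rf_def)
          then show ?thesis by (cases "B = C") auto
        qed
      qed
      have CDn: "C \<union> D \<notin> \<tau> - {C}" using RD[OF t] Dne by blast
      have npos: "nblocks \<sigma> C \<ge> 1" using nb_pos[OF finsig Rp(1)[OF t] C sig Rp(2)[OF t]] .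
      have "{E\<in>\<sigma>. E \<subseteq> C \<union> D} = {E\<in>\<sigma>. E \<subseteq> C}" using sigD by blast
      then have ncd: "nblocks \<sigma> (C \<union> D) = nblocks \<sigma> C" by (rule nb_eq)
      have "(\<Prod>B\<in>insert (C \<union> D) (\<tau> - {C}). ff q1 q2 (nblocks (insert D \<sigma>) B))
          = ff q1 q2 (nblocks (insert D \<sigma>) (C \<union> D)) * (\<Prod>B\<in>\<tau> - {C}. ff q1 q2 (nblocks (insert D \<sigma>) B))"
        using Rfin[OF t] CDn by (simp add: prod.insert)
      also have "ff q1 q2 (nblocks (insert D \<sigma>) (C \<union> D)) = ff q1 q2 (nblocks \<sigma> C) * (q2 - of_nat (nblocks \<sigma> C) * q1)"
        using nb_ins_sub[OF finsig nD, of "C \<union> D"] ncd ff_Suc[OF npos] by simp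
      also have "(\<Prod>B\<in>\<tau> - {C}. ff q1 q2 (nblocks (insert D \<sigma>) B)) = (\<Prod>B\<in>\<tau> - {C}. ff q1 q2 (nblocks \<sigma> B))"
        by (rule prod.cong[OF refl]) (simp add: nb_ins_nsub nsubD RD[OF t])
      also have "(\<Prod>B\<in>\<tau>. ff q1 q2 (nblocks \<sigma> B)) = ff q1 q2 (nblocks \<sigma> C) * (\<Prod>B\<in>\<tau> - {C}. ff q1 q2 (nblocks \<sigma> B))"
        by (rule prod.remove[OF Rfin[OF t] C])
      ultimately show ?thesis using r Rp(2)[OF t] by (simp add: mu_eq algebra_simps)
    qed
    show "(\<Sum>\<tau>\<in>{\<tau>. partition_on S' \<tau>}. mu q1 q2 (insert D \<sigma>) \<tau> * mu q2 q3 \<tau> \<pi>') = mu q1 q3 (insert D \<sigma>) \<pi>'"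
    proof (cases "rf (insert D \<sigma>) \<pi>'")
      case False
      have "sum F R' = 0"
      proof (rule sum.neutral, intro ballI)
        fix \<tau>' assume "\<tau>' \<in> R'"
        then have "rf (insert D \<sigma>) \<tau>'" by (simp add: R'_def)
        then have "\<not> rf \<tau>' \<pi>'" using False rf_trans by blast
        then show "F \<tau>' = 0" by (simp add: F_def mu_eq)
      qed
      then show ?thesis using LHS False by (simp add: F_def mu_eq)
    next
      case True
      obtain B0 where B0: "B0 \<in> \<pi>'" "D \<subseteq> B0" using True by (auto simp: rf_def)
      have oth: "B \<inter> D = {}" if "B \<in> \<pi>'" "B \<noteq> B0" for B
        using part_disj[OF Pp that(1) B0(1) that(2)] B0(2) by blast
      show ?thesis
      proof (cases "B0 = D")
        case B0D: True
        define \<pi> where "\<pi> = \<pi>' - {D}"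
        have p\<pi>: "partition_on S \<pi>" using part_remove[OF Pp B0(1)] B0D by (simp add: \<pi>_def S_def)
        have piD: "B \<inter> D = {}" if "B \<in> \<pi>" for B using oth that B0D by (auto simp: \<pi>_def)
        have G: "F (insert D \<tau>) + (\<Sum>C\<in>\<tau>. F (insert (C \<union> D) (\<tau> - {C}))) = mu q1 q2 \<sigma> \<tau> * mu q2 q3 \<tau> \<pi>"
          if t: "\<tau> \<in> R" for \<tau>
        proof -
          have g0: "F (insert (C \<union> D) (\<tau> - {C})) = 0" if C: "C \<in> \<tau>" for C
          proof -
            have "\<not> rf (insert (C \<union> D) (\<tau> - {C})) \<pi>'"
            proof
              assume "rf (insert (C \<union> D) (\<tau> - {C})) \<pi>'"
              then obtain B where B: "B \<in> \<pi>'" "C \<union> D \<subseteq> B" by (auto simp: rf_def)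
              have "B = D"
              proof (rule ccontr)
                assume "B \<noteq> D"
                then have "B \<inter> D = {}" using oth[OF B(1)] B0D by simp
                then show False using B(2) Dne by auto
              qed
              then show False using B(2) RD[OF t C] by auto
            qed
            then show ?thesis by (simp add: F_def mu_eq)
          qed
          have rfe: "rf (insert D \<tau>) \<pi>' \<longleftrightarrow> rf \<tau> \<pi>"
          proof
            assume a: "rf (insert D \<tau>) \<pi>'"
            show "rf \<tau> \<pi>"
            proof (unfold rf_def, intro ballI)
              fix E assume E: "E \<in> \<tau>"
              then obtain B where B: "B \<in> \<pi>'" "E \<subseteq> B" using a by (auto simp: rf_def)
              have "B \<noteq> D" using B(2) RD[OF t E] by auto
              then show "\<exists>B\<in>\<pi>. E \<subseteq> B" using B by (auto simp: \<pi>_def)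
            qed
          next
            assume a: "rf \<tau> \<pi>"
            show "rf (insert D \<tau>) \<pi>'"
            proof (unfold rf_def, intro ballI)
              fix E assume E: "E \<in> insert D \<tau>"
              show "\<exists>B\<in>\<pi>'. E \<subseteq> B"
              proof (cases "E = D")
                case True then show ?thesis using B0 B0D by auto
              next
                case False
                then have "E \<in> \<tau>" using E by simp
                then obtain B where "B \<in> \<pi>" "E \<subseteq> B" using a by (auto simp: rf_def)
                then show ?thesis by (auto simp: \<pi>_def)
              qed
            qed
          qed
          have m23: "mu q2 q3 (insert D \<tau>) \<pi>' = mu q2 q3 \<tau> \<pi>"
          proof (cases "rf \<tau> \<pi>")
            case False then show ?thesis using rfe by (simp add: mu_eq)
          next
            case rt: True
            have "(\<Prod>B\<in>\<pi>'. ff q2 q3 (nblocks (insert D \<tau>) B))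
                = ff q2 q3 (nblocks (insert D \<tau>) D) * (\<Prod>B\<in>\<pi>. ff q2 q3 (nblocks (insert D \<tau>) B))"
              unfolding \<pi>_def by (rule prod.remove[OF fpp B0(1)[unfolded B0D]])
            also have "ff q2 q3 (nblocks (insert D \<tau>) D) = 1"
              using nb_ins_sub[OF Rfin[OF t] Dnot[OF t], of D] n0t[OF t] by simp
            also have "(\<Prod>B\<in>\<pi>. ff q2 q3 (nblocks (insert D \<tau>) B)) = (\<Prod>B\<in>\<pi>. ff q2 q3 (nblocks \<tau> B))"
              by (rule prod.cong[OF refl]) (simp add: nb_ins_nsub nsubD piD)
            finally show ?thesis using rt rfe by (simp add: mu_eq)
          qed
          show ?thesis using g0 m23 M1[OF t] by (simp add: F_def)
        qed
        have rs: "rf \<sigma> \<pi>"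
        proof (unfold rf_def, intro ballI)
          fix E assume E: "E \<in> \<sigma>"
          then obtain B where B: "B \<in> \<pi>'" "E \<subseteq> B" using \<open>rf (insert D \<sigma>) \<pi>'\<close> by (auto simp: rf_def)
          have "B \<noteq> D" using B(2) sigD[OF E] by auto
          then show "\<exists>B\<in>\<pi>. E \<subseteq> B" using B by (auto simp: \<pi>_def)
        qed
        have rhs: "mu q1 q3 (insert D \<sigma>) \<pi>' = mu q1 q3 \<sigma> \<pi>"
        proof -
          have "(\<Prod>B\<in>\<pi>'. ff q1 q3 (nblocks (insert D \<sigma>) B))
              = ff q1 q3 (nblocks (insert D \<sigma>) D) * (\<Prod>B\<in>\<pi>. ff q1 q3 (nblocks (insert D \<sigma>) B))"
            unfolding \<pi>_def by (rule prod.remove[OF fpp B0(1)[unfolded B0D]])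
          also have "ff q1 q3 (nblocks (insert D \<sigma>) D) = 1"
            using nb_ins_sub[OF finsig nD, of D] n0 by simp
          also have "(\<Prod>B\<in>\<pi>. ff q1 q3 (nblocks (insert D \<sigma>) B)) = (\<Prod>B\<in>\<pi>. ff q1 q3 (nblocks \<sigma> B))"
            by (rule prod.cong[OF refl]) (simp add: nb_ins_nsub nsubD piD)
          finally show ?thesis using rs \<open>rf (insert D \<sigma>) \<pi>'\<close> by (simp add: mu_eq)
        qed
        have "sum F R' = (\<Sum>\<tau>\<in>R. mu q1 q2 \<sigma> \<tau> * mu q2 q3 \<tau> \<pi>)"
          using dec G by simp
        also have "\<dots> = mu q1 q3 \<sigma> \<pi>" by (rule IHS[OF p\<pi>])
        finally show ?thesis using LHS rhs by (simp add: F_def)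
      next
        case False
        define A where "A = B0 - D"
        define \<pi> where "\<pi> = insert A (\<pi>' - {B0})"
        have Ane: "A \<noteq> {}" using False B0(2) by (auto simp: A_def)
        have B0S: "B0 \<subseteq> S'" using part_sub[OF Pp B0(1)] .
        have p\<pi>: "partition_on S \<pi>"
        proof -
          have pr: "partition_on (S' - B0) (\<pi>' - {B0})" using part_remove[OF Pp B0(1)] .
          have "disjnt A (S' - B0)" by (auto simp: A_def disjnt_def)
          from part_insert[OF pr this Ane] have "partition_on (A \<union> (S' - B0)) \<pi>" by (simp add: \<pi>_def)
          moreover have "A \<union> (S' - B0) = S" using B0S B0(2) by (auto simp: A_def S_def)
          ultimately show ?thesis by simp
        qed
        have Anot: "A \<notin> \<pi>' - {B0}"
        proof
          assume a: "A \<in> \<pi>' - {B0}"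
          then have "A \<inter> B0 = {}" using part_disj[OF Pp, of A B0] B0(1) by auto
          then show False using Ane by (auto simp: A_def)
        qed
        have Ain: "A \<in> \<pi>" by (simp add: \<pi>_def)
        have fpr: "finite (\<pi>' - {B0})" using fpp by simp
        have othD: "B \<inter> D = {}" if "B \<in> \<pi>' - {B0}" for B using oth that by auto
        have othB0: "B \<inter> B0 = {}" if "B \<in> \<pi>' - {B0}" for B
          using part_disj[OF Pp, of B B0] B0(1) that by auto
        define n0 where "n0 = nblocks \<sigma> A"
        have nbB0: "nblocks \<sigma> B0 = n0"
        proof -
          have "{E\<in>\<sigma>. E \<subseteq> B0} = {E\<in>\<sigma>. E \<subseteq> A}" using sigD by (auto simp: A_def)
          then show ?thesis unfolding n0_def by (rule nb_eq)
        qed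
        have lift: "\<exists>B'\<in>\<pi>. E \<subseteq> B'" if "E \<inter> D = {}" "B \<in> \<pi>'" "E \<subseteq> B" for E B
        proof (cases "B = B0")
          case True then have "E \<subseteq> A" using that by (auto simp: A_def)
          then show ?thesis using Ain by blast
        next
          case False then have "B \<in> \<pi>" using that by (simp add: \<pi>_def)
          then show ?thesis using that by blast
        qed
        have rs: "rf \<sigma> \<pi>"
        proof (unfold rf_def, intro ballI)
          fix E assume E: "E \<in> \<sigma>"
          then obtain B where B: "B \<in> \<pi>'" "E \<subseteq> B" using \<open>rf (insert D \<sigma>) \<pi>'\<close> by (auto simp: rf_def)
          then show "\<exists>B\<in>\<pi>. E \<subseteq> B" using lift[OF sigD(1)[OF E]] by blast
        qed
        have n0pos: "n0 \<ge> 1" unfolding n0_def using nb_pos[OF finsig p\<pi> Ain sig rs] .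
        have rhs: "mu q1 q3 (insert D \<sigma>) \<pi>' = (q3 - of_nat n0 * q1) * mu q1 q3 \<sigma> \<pi>"
        proof -
          have "(\<Prod>B\<in>\<pi>'. ff q1 q3 (nblocks (insert D \<sigma>) B))
              = ff q1 q3 (nblocks (insert D \<sigma>) B0) * (\<Prod>B\<in>\<pi>' - {B0}. ff q1 q3 (nblocks (insert D \<sigma>) B))"
            by (rule prod.remove[OF fpp B0(1)])
          also have "ff q1 q3 (nblocks (insert D \<sigma>) B0) = ff q1 q3 n0 * (q3 - of_nat n0 * q1)"
            using nb_ins_sub[OF finsig nD B0(2)] nbB0 ff_Suc[OF n0pos] by simp
          also have "(\<Prod>B\<in>\<pi>' - {B0}. ff q1 q3 (nblocks (insert D \<sigma>) B)) = (\<Prod>B\<in>\<pi>' - {B0}. ff q1 q3 (nblocks \<sigma> B))"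
            by (rule prod.cong[OF refl]) (simp add: nb_ins_nsub nsubD othD)
          also have "(\<Prod>B\<in>\<pi>. ff q1 q3 (nblocks \<sigma> B)) = ff q1 q3 n0 * (\<Prod>B\<in>\<pi>' - {B0}. ff q1 q3 (nblocks \<sigma> B))"
            unfolding \<pi>_def using prod.insert[OF fpr Anot] n0_def by simp
          ultimately show ?thesis using rs \<open>rf (insert D \<sigma>) \<pi>'\<close> by (simp add: mu_eq algebra_simps)
        qed
        have G: "F (insert D \<tau>) + (\<Sum>C\<in>\<tau>. F (insert (C \<union> D) (\<tau> - {C}))) = (q3 - of_nat n0 * q1) * (mu q1 q2 \<sigma> \<tau> * mu q2 q3 \<tau> \<pi>)"
          if t: "\<tau> \<in> R" for \<tau>
        proof -
          have back1: "rf \<tau> \<pi>" if r1: "rf (insert D \<tau>) \<pi>'"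
          proof (unfold rf_def, intro ballI)
            fix E assume E: "E \<in> \<tau>"
            then obtain B where B: "B \<in> \<pi>'" "E \<subseteq> B" using r1 by (auto simp: rf_def)
            then show "\<exists>B\<in>\<pi>. E \<subseteq> B" using lift[OF RD(1)[OF t E]] by blast
          qed
          have back2: "rf \<tau> \<pi>" if C: "C \<in> \<tau>" and r: "rf (insert (C \<union> D) (\<tau> - {C})) \<pi>'" for C
          proof (unfold rf_def, intro ballI)
            fix E assume E: "E \<in> \<tau>"
            have "\<exists>B\<in>\<pi>'. E \<subseteq> B"
            proof (cases "E = C")
              case True
              obtain B where "B \<in> \<pi>'" "C \<union> D \<subseteq> B" using r by (auto simp: rf_def)
              then show ?thesis using True by blast
            next
              case False
              then have "E \<in> insert (C \<union> D) (\<tau> - {C})" using E by simp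
              then show ?thesis using r by (auto simp: rf_def)
            qed
            then obtain B where B: "B \<in> \<pi>'" "E \<subseteq> B" by blast
            then show "\<exists>B\<in>\<pi>. E \<subseteq> B" using lift[OF RD(1)[OF t E]] by blast
          qed
          show ?thesis
          proof (cases "rf \<tau> \<pi>")
            case False
            have "F (insert D \<tau>) = 0" using back1 False by (auto simp: F_def mu_eq)
            moreover have "F (insert (C \<union> D) (\<tau> - {C})) = 0" if "C \<in> \<tau>" for C
              using back2[OF that] False by (auto simp: F_def mu_eq)
            ultimately show ?thesis using False by (simp add: mu_eq)
          next
            case rt: True
            define k where "k = nblocks \<tau> A"
            have kpos: "k \<ge> 1" unfolding k_def using nb_pos[OF Rfin[OF t] p\<pi> Ain Rp(1)[OF t] rt] .
            have nbtB0: "nblocks \<tau> B0 = k"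
            proof -
              have "{E\<in>\<tau>. E \<subseteq> B0} = {E\<in>\<tau>. E \<subseteq> A}" using RD[OF t] by (auto simp: A_def)
              then show ?thesis unfolding k_def by (rule nb_eq)
            qed
            have rest: "mu q2 q3 \<tau> \<pi> = ff q2 q3 k * (\<Prod>B\<in>\<pi>' - {B0}. ff q2 q3 (nblocks \<tau> B))"
              using rt prod.insert[OF fpr Anot] by (simp add: mu_eq \<pi>_def k_def)
            have ri: "rf (insert D \<tau>) \<pi>'"
            proof (unfold rf_def, intro ballI)
              fix E assume E: "E \<in> insert D \<tau>"
              show "\<exists>B\<in>\<pi>'. E \<subseteq> B"
              proof (cases "E = D")
                case True then show ?thesis using B0 by auto
              next
                case False
                then have "E \<in> \<tau>" using E by simp
                then obtain B where B: "B \<in> \<pi>" "E \<subseteq> B" using rt by (auto simp: rf_def)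
                show ?thesis
                proof (cases "B = A")
                  case True then show ?thesis using B B0(1) by (auto simp: A_def)
                next
                  case False then show ?thesis using B by (auto simp: \<pi>_def)
                qed
              qed
            qed
            have F1: "F (insert D \<tau>) = mu q1 q2 \<sigma> \<tau> * (mu q2 q3 \<tau> \<pi> * (q3 - of_nat k * q2))"
            proof -
              have "(\<Prod>B\<in>\<pi>'. ff q2 q3 (nblocks (insert D \<tau>) B))
                  = ff q2 q3 (nblocks (insert D \<tau>) B0) * (\<Prod>B\<in>\<pi>' - {B0}. ff q2 q3 (nblocks (insert D \<tau>) B))"
                by (rule prod.remove[OF fpp B0(1)])
              also have "ff q2 q3 (nblocks (insert D \<tau>) B0) = ff q2 q3 k * (q3 - of_nat k * q2)"
                using nb_ins_sub[OF Rfin[OF t] Dnot[OF t] B0(2)] nbtB0 ff_Suc[OF kpos] by simp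
              also have "(\<Prod>B\<in>\<pi>' - {B0}. ff q2 q3 (nblocks (insert D \<tau>) B)) = (\<Prod>B\<in>\<pi>' - {B0}. ff q2 q3 (nblocks \<tau> B))"
                by (rule prod.cong[OF refl]) (simp add: nb_ins_nsub nsubD othD)
              finally have "mu q2 q3 (insert D \<tau>) \<pi>' = mu q2 q3 \<tau> \<pi> * (q3 - of_nat k * q2)"
                using ri rest by (simp add: mu_eq algebra_simps)
              then show ?thesis using M1[OF t] by (simp add: F_def)
            qed
            have F2: "F (insert (C \<union> D) (\<tau> - {C})) =
                (if C \<subseteq> A then mu q1 q2 \<sigma> \<tau> * mu q2 q3 \<tau> \<pi> * (q2 - of_nat (nblocks \<sigma> C) * q1) else 0)"
              if C: "C \<in> \<tau>" for C
            proof (cases "C \<subseteq> A")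
              case False
              have "\<not> rf (insert (C \<union> D) (\<tau> - {C})) \<pi>'"
              proof
                assume "rf (insert (C \<union> D) (\<tau> - {C})) \<pi>'"
                then obtain B where B: "B \<in> \<pi>'" "C \<union> D \<subseteq> B" by (auto simp: rf_def)
                have "B = B0"
                proof (rule ccontr)
                  assume "B \<noteq> B0"
                  then have "B \<inter> D = {}" using oth B(1) by simp
                  then show False using B(2) Dne by auto
                qed
                then have "C \<subseteq> A" using B(2) RD(1)[OF t C] by (auto simp: A_def)
                then show False using False by simp
              qed
              then show ?thesis using False by (simp add: F_def mu_eq)
            next
              case CA: True
              let ?g = "insert (C \<union> D) (\<tau> - {C})"
              have rg: "rf ?g \<pi>'"
              proof (unfold rf_def, intro ballI)
                fix E assume E: "E \<in> ?g"
                show "\<exists>B\<in>\<pi>'. E \<subseteq> B"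
                proof (cases "E = C \<union> D")
                  case True then show ?thesis using CA B0 by (auto simp: A_def)
                next
                  case False
                  then have "E \<in> \<tau>" using E by simp
                  then obtain B where B: "B \<in> \<pi>" "E \<subseteq> B" using rt by (auto simp: rf_def)
                  show ?thesis
                  proof (cases "B = A")
                    case True then show ?thesis using B B0(1) by (auto simp: A_def)
                  next
                    case False then show ?thesis using B by (auto simp: \<pi>_def)
                  qed
                qed
              qed
              have CDn: "C \<union> D \<notin> \<tau> - {C}" using RD[OF t] Dne by blast
              have fg: "finite ?g" using Rfin[OF t] by simp
              have nbg: "nblocks ?g B0 = k"
              proof -
                have e: "{E\<in>?g. E \<subseteq> B0} = insert (C \<union> D) ({E\<in>\<tau>. E \<subseteq> A} - {C})"
                  using CA B0(2) RD[OF t] by (auto simp: A_def)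
                have Cin: "C \<in> {E\<in>\<tau>. E \<subseteq> A}" using C CA by simp
                have fT: "finite {E\<in>\<tau>. E \<subseteq> A}" using Rfin[OF t] by simp
                have "C \<union> D \<notin> {E\<in>\<tau>. E \<subseteq> A} - {C}" using CDn by blast
                then have "card {E\<in>?g. E \<subseteq> B0} = Suc (card ({E\<in>\<tau>. E \<subseteq> A} - {C}))"
                  unfolding e using fT by simp
                also have "\<dots> = card {E\<in>\<tau>. E \<subseteq> A}"
                  using card_Suc_Diff1[OF fT Cin] .
                finally show ?thesis by (simp add: nblocks_def k_def)
              qed
              have nbo: "nblocks ?g B = nblocks \<tau> B" if B: "B \<in> \<pi>' - {B0}" for B
              proof -
                have "\<not> C \<subseteq> B" using othB0[OF B] CA RD(2)[OF t C] by (auto simp: A_def)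
                moreover have "\<not> C \<union> D \<subseteq> B" using othD[OF B] Dne by auto
                ultimately have "{E\<in>?g. E \<subseteq> B} = {E\<in>\<tau>. E \<subseteq> B}" by auto
                then show ?thesis by (rule nb_eq)
              qed
              have "(\<Prod>B\<in>\<pi>'. ff q2 q3 (nblocks ?g B))
                  = ff q2 q3 (nblocks ?g B0) * (\<Prod>B\<in>\<pi>' - {B0}. ff q2 q3 (nblocks ?g B))"
                by (rule prod.remove[OF fpp B0(1)])
              also have "(\<Prod>B\<in>\<pi>' - {B0}. ff q2 q3 (nblocks ?g B)) = (\<Prod>B\<in>\<pi>' - {B0}. ff q2 q3 (nblocks \<tau> B))"
                by (rule prod.cong[OF refl]) (simp add: nbo)
              finally have "mu q2 q3 ?g \<pi>' = mu q2 q3 \<tau> \<pi>"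
                using rg rest nbg by (simp add: mu_eq)
              then show ?thesis using CA by (simp add: F_def M2[OF t C] mult_ac)
            qed
            let ?TA = "{C\<in>\<tau>. C \<subseteq> A}"
            have "(\<Sum>C\<in>\<tau>. F (insert (C \<union> D) (\<tau> - {C})))
                = (\<Sum>C\<in>\<tau>. if C \<subseteq> A then mu q1 q2 \<sigma> \<tau> * mu q2 q3 \<tau> \<pi> * (q2 - of_nat (nblocks \<sigma> C) * q1) else 0)"
              by (rule sum.cong[OF refl]) (simp add: F2)
            also have "\<dots> = (\<Sum>C\<in>?TA. mu q1 q2 \<sigma> \<tau> * mu q2 q3 \<tau> \<pi> * (q2 - of_nat (nblocks \<sigma> C) * q1))"
              by (rule sum.inter_filter[OF Rfin[OF t], symmetric])
            also have "\<dots> = mu q1 q2 \<sigma> \<tau> * mu q2 q3 \<tau> \<pi> * (\<Sum>C\<in>?TA. (q2 - of_nat (nblocks \<sigma> C) * q1))"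
              by (simp add: sum_distrib_left)
            also have "(\<Sum>C\<in>?TA. (q2 - of_nat (nblocks \<sigma> C) * q1)) = of_nat k * q2 - of_nat n0 * q1"
            proof -
              have "(\<Sum>C\<in>?TA. (q2 - of_nat (nblocks \<sigma> C) * q1)) = of_nat (card ?TA) * q2 - of_nat (\<Sum>C\<in>?TA. nblocks \<sigma> C) * q1"
                by (simp add: sum_subtractf sum_distrib_right)
              also have "(\<Sum>C\<in>?TA. nblocks \<sigma> C) = n0"
                unfolding n0_def by (rule count_sum[OF finsig Rfin[OF t] Rp(1)[OF t] p\<pi> Ain sig Rp(2)[OF t] rt])
              also have "card ?TA = k" by (simp add: k_def nblocks_def)
              finally show ?thesis .
            qed
            finally show ?thesis using F1 by (simp add: algebra_simps)
          qed
        qed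
        have "sum F R' = (\<Sum>\<tau>\<in>R. (q3 - of_nat n0 * q1) * (mu q1 q2 \<sigma> \<tau> * mu q2 q3 \<tau> \<pi>))"
          using dec G by simp
        also have "\<dots> = (q3 - of_nat n0 * q1) * mu q1 q3 \<sigma> \<pi>"
          by (simp add: sum_distrib_left[symmetric] IHS[OF p\<pi>])
        finally show ?thesis using LHS rhs by (simp add: F_def)
      qed
    qed
  qed
qed


theorem theoremA1:
  fixes S :: "'b set" and q1 q2 q3 :: "'a::comm_ring_1"
  assumes "finite S"
    and "\<sigma> \<in> partitions S" and "\<pi> \<in> partitions S"
  shows "(\<Sum>\<tau>\<in>partitions S. mu q1 q2 \<sigma> \<tau> * mu q2 q3 \<tau> \<pi>) = mu q1 q3 \<sigma> \<pi>"
proof -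
  have ps: "partition_on S \<sigma>" "partition_on S \<pi>" using assms(2,3) by (auto simp: partitions_def)
  have "finite \<sigma>" using finite_elements[OF assms(1) ps(1)] .
  from main[OF this, of q1 q2 q3] assms(1) ps show ?thesis by (simp add: partitions_def)
qed

end
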